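(* For every $n\geq 1$, $\operatorname{diam}(\mathrm{CIM}_n)\leq 2n-2$.
   Context: For a directed acyclic graph (DAG) $\mathcal{G}$ on vertex set $[n]=\{1,\dots,n\}$, the characteristic imset $c_\mathcal{G}$ is the 0/1-vector indexed by the subsets $S\subseteq[n]$ with $|S|\geq 2$, with $c_\mathcal{G}(S)=1$ if there exists $i\in S$ such that $S\subseteq \mathrm{pa}_\mathcal{G}(i)\cup\{i\}$ (where $\mathrm{pa}_\mathcal{G}(i)$ is the set of parents of $i$), and $c_\mathcal{G}(S)=0$ otherwise. The characteristic imset polytope is $\mathrm{CIM}_n=\operatorname{conv}(c_\mathcal{G}\colon \mathcal{G}\text{ a DAG on }[n])$. For a polytope $P$, the vertex-edge graph $G(P)$ has the vertices of $P$ as nodes, with two vertices adjacent iff their convex hull is an edge of $P$; $\operatorname{diam}(P)$ is the maximum over pairs of vertices of the length of a shortest path between them in $G(P)$. *)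

theory Defs
  imports "HOL-Analysis.Analysis" "HOL-Library.Function_Algebras"
begin

text \<open>Real vector space structure on functions (pointwise), so that vectors
indexed by subsets of [n] can be represented as functions nat set => real.\<close>

instantiation "fun" :: (type, real_vector) real_vector
begin
definition scaleR_fun_def: "scaleR r f = (\<lambda>x. scaleR r (f x))"
instance
  by standard (auto simp: scaleR_fun_def fun_eq_iff scaleR_add_right scaleR_add_left)
end

text \<open>A DAG on [n] = {1..n}: an acyclic edge relation (j,i) meaning j -> i.\<close>
definition is_DAG :: "nat \<Rightarrow> (nat \<times> nat) set \<Rightarrow> bool" where
  "is_DAG n E \<longleftrightarrow> E \<subseteq> {1..n} \<times> {1..n} \<and> acyclic E"

definition pa :: "(nat \<times> nat) set \<Rightarrow> nat \<Rightarrow> nat set" where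
  "pa E i = {j. (j, i) \<in> E}"

text \<open>Characteristic imset, indexed by subsets S of [n] with |S| >= 2
  (coordinates outside this index set are 0).\<close>
definition char_imset :: "nat \<Rightarrow> (nat \<times> nat) set \<Rightarrow> nat set \<Rightarrow> real" where
  "char_imset n E = (\<lambda>S. if S \<subseteq> {1..n} \<and> 2 \<le> card S \<and> (\<exists>i\<in>S. S \<subseteq> pa E i \<union> {i}) then 1 else 0)"

definition CIM :: "nat \<Rightarrow> (nat set \<Rightarrow> real) set" where
  "CIM n = convex hull {char_imset n E | E. is_DAG n E}"

definition poly_vertices :: "'a::real_vector set \<Rightarrow> 'a set" where
  "poly_vertices P = {v. v extreme_point_of P}"

definition poly_adj :: "'a::real_vector set \<Rightarrow> 'a \<Rightarrow> 'a \<Rightarrow> bool" where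
  "poly_adj P u v \<longleftrightarrow> u \<in> poly_vertices P \<and> v \<in> poly_vertices P \<and> u \<noteq> v
      \<and> (convex hull {u, v}) face_of P"

definition is_walk :: "('a \<Rightarrow> 'a \<Rightarrow> bool) \<Rightarrow> 'a list \<Rightarrow> bool" where
  "is_walk adj p \<longleftrightarrow> p \<noteq> [] \<and> (\<forall>i < length p - 1. adj (p ! i) (p ! Suc i))"

definition graph_dist :: "('a \<Rightarrow> 'a \<Rightarrow> bool) \<Rightarrow> 'a \<Rightarrow> 'a \<Rightarrow> enat" where
  "graph_dist adj u v =
     (INF p \<in> {p. is_walk adj p \<and> hd p = u \<and> last p = v}. enat (length p - 1))"

definition poly_diam :: "'a::real_vector set \<Rightarrow> enat" where
  "poly_diam P = (SUP u \<in> poly_vertices P. SUP v \<in> poly_vertices P. graph_dist (poly_adj P) u v)"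

end

theory Submission imports Defs begin

definition lf :: "(nat set \<Rightarrow> real) \<Rightarrow> nat set set \<Rightarrow> (nat set \<Rightarrow> real) \<Rightarrow> real" where
  "lf w I h = (\<Sum>S\<in>I. w S * h S)"

lemma lf_comb: "lf w I (a *\<^sub>R x + b *\<^sub>R y) = a * lf w I x + b * lf w I y"
  by (simp add: lf_def scaleR_fun_def sum.distrib sum_distrib_left algebra_simps)

lemma exposed_face:
  fixes X :: "(nat set \<Rightarrow> real) set"
  assumes fin: "finite X" and le: "\<And>x. x \<in> X \<Longrightarrow> lf w I x \<le> m"
  shows "convex hull {x\<in>X. lf w I x = m} face_of convex hull X"
proof -
  let ?Y = "{x\<in>X. lf w I x = m}"
  have aff: "affine {x. lf w I x = m}"
    unfolding affine_def
  proof (intro ballI allI impI)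
    fix x y and u v :: real
    assume "x \<in> {x. lf w I x = m}" "y \<in> {x. lf w I x = m}" "u + v = 1"
    then show "u *\<^sub>R x + v *\<^sub>R y \<in> {x. lf w I x = m}"
      by (simp add: lf_comb) (metis distrib_right mult_1)
  qed
  have cvx: "convex {x. lf w I x < m}"
  proof (clarsimp simp: convex_def lf_comb)
    fix x y and u v :: real
    assume a: "lf w I x < m" "lf w I y < m" "0 \<le> u" "0 \<le> v" "u + v = 1"
    have e: "u * m + v * m = m" using a(5) by (metis distrib_right mult_1)
    have 1: "u * lf w I x \<le> u * m" using a by (intro mult_left_mono) auto
    have 2: "v * lf w I y \<le> v * m" using a by (intro mult_left_mono) auto
    show "u * lf w I x + v * lf w I y < m"
    proof (cases "u > 0")
      case True
      then have "u * lf w I x < u * m" using a by (intro mult_strict_left_mono) auto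
      then show ?thesis using 2 e by linarith
    next
      case False
      then have "v > 0" using a by auto
      then have "v * lf w I y < v * m" using a by (intro mult_strict_left_mono) auto
      then show ?thesis using 1 e by linarith
    qed
  qed
  have h1: "affine hull ?Y \<subseteq> {x. lf w I x = m}" by (rule hull_minimal) (auto simp: aff)
  have h2: "convex hull (X - ?Y) \<subseteq> {x. lf w I x < m}"
  proof (rule hull_minimal)
    show "X - ?Y \<subseteq> {x. lf w I x < m}" using le by force
  qed (rule cvx)
  have "affine hull ?Y \<inter> convex hull (X - ?Y) = {}" using h1 h2 by force
  then show ?thesis by (intro face_of_convex_hulls) (auto simp: fin)
qed


lemma agr:
  fixes g h :: "nat set \<Rightarrow> real"
  assumes fin: "finite I" and g01: "\<And>S. S \<in> I \<Longrightarrow> g S = 0 \<or> g S = 1"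
    and h01: "\<And>S. S \<in> I \<Longrightarrow> h S = 0 \<or> h S = 1"
  shows "(\<Sum>S\<in>I. (if g S = 1 then 1 else -1) * h S) \<le> sum g I"
    and "(\<Sum>S\<in>I. (if g S = 1 then 1 else -1) * h S) = sum g I \<longleftrightarrow> (\<forall>S\<in>I. h S = g S)"
    and "\<not> (\<forall>S\<in>I. h S = g S) \<Longrightarrow> (\<Sum>S\<in>I. (if g S = 1 then 1 else -1) * h S) \<le> sum g I - 1"
proof -
  define d where "d S = g S - (if g S = 1 then 1 else -1) * h S" for S
  have d01: "d S = 0 \<or> d S = 1" if "S \<in> I" for S
    using g01[OF that] h01[OF that] by (auto simp: d_def)
  have d0: "d S = 0 \<longleftrightarrow> h S = g S" if "S \<in> I" for S
    using g01[OF that] h01[OF that] by (auto simp: d_def)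
  have eq: "sum g I - (\<Sum>S\<in>I. (if g S = 1 then 1 else -1) * h S) = sum d I"
    by (simp add: d_def sum_subtractf)
  have nn: "0 \<le> sum d I" using d01 by (intro sum_nonneg) force
  show "(\<Sum>S\<in>I. (if g S = 1 then 1 else -1) * h S) \<le> sum g I" using eq nn by linarith
  have "sum d I = 0 \<longleftrightarrow> (\<forall>S\<in>I. d S = 0)"
    using d01 fin by (intro sum_nonneg_eq_0_iff) force+
  then show "(\<Sum>S\<in>I. (if g S = 1 then 1 else -1) * h S) = sum g I \<longleftrightarrow> (\<forall>S\<in>I. h S = g S)"
    using eq d0 by auto
  assume "\<not> (\<forall>S\<in>I. h S = g S)"
  then obtain S where S: "S \<in> I" "d S = 1" using d0 d01 by blast
  have "d S \<le> sum d I" using S fin d01 by (intro member_le_sum) force+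
  then show "(\<Sum>S\<in>I. (if g S = 1 then 1 else -1) * h S) \<le> sum g I - 1" using eq S by linarith
qed

lemma char_cases: "char_imset n E S = 0 \<or> char_imset n E S = 1"
  by (simp add: char_imset_def)

lemma char_one: "char_imset n E S = 1 \<longleftrightarrow> S \<subseteq> {1..n} \<and> 2 \<le> card S \<and> (\<exists>l\<in>S. S \<subseteq> pa E l \<union> {l})"
  by (simp add: char_imset_def)

lemma char_out: "S \<notin> Pow {1..n} \<Longrightarrow> char_imset n E S = 0"
  by (simp add: char_imset_def)

lemma char_eqI: "(\<And>S. S \<in> Pow {1..n} \<Longrightarrow> char_imset n E S = char_imset n H S) \<Longrightarrow> char_imset n E = char_imset n H"
  by (rule ext) (metis char_out)

lemma finite_DAGs: "finite {E. is_DAG n E}"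
proof -
  have "{E. is_DAG n E} \<subseteq> Pow ({1..n} \<times> {1..n})" by (auto simp: is_DAG_def)
  then show ?thesis by (rule finite_subset) simp
qed

lemma finite_X: "finite {char_imset n E | E. is_DAG n E}"
proof -
  have "{char_imset n E | E. is_DAG n E} = char_imset n ` {E. is_DAG n E}" by auto
  then show ?thesis using finite_DAGs by simp
qed

lemma vertex:
  assumes "is_DAG n E"
  shows "char_imset n E extreme_point_of CIM n"
proof -
  define X where "X = {char_imset n E | E. is_DAG n E}"
  define c where "c = char_imset n E"
  define I where "I = (Pow {1..n} :: nat set set)"
  define w where "w S = (if c S = 1 then 1 else -1 :: real)" for S
  have finI: "finite I" by (simp add: I_def)
  have le: "lf w I x \<le> sum c I" and eqv: "lf w I x = sum c I \<longleftrightarrow> x = c" if "x \<in> X" for x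
  proof -
    obtain H where H: "x = char_imset n H" using \<open>x \<in> X\<close> unfolding X_def by blast
    note a = agr[OF finI, of c x]
    have 1: "\<And>S. S \<in> I \<Longrightarrow> c S = 0 \<or> c S = 1" "\<And>S. S \<in> I \<Longrightarrow> x S = 0 \<or> x S = 1"
      by (auto simp: c_def H char_cases)
    show "lf w I x \<le> sum c I" using a(1)[OF 1] by (simp add: lf_def w_def)
    have "lf w I x = sum c I \<longleftrightarrow> (\<forall>S\<in>I. x S = c S)" using a(2)[OF 1] by (simp add: lf_def w_def)
    also have "\<dots> \<longleftrightarrow> x = c"
      using char_eqI[of n H E] by (auto simp: H c_def I_def)
    finally show "lf w I x = sum c I \<longleftrightarrow> x = c" .
  qed
  have "{x\<in>X. lf w I x = sum c I} = {c}" using eqv assms by (auto simp: X_def c_def)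
  then have "{c} face_of convex hull X"
    using exposed_face[OF _ le, of X] finite_X by (simp add: X_def)
  then show ?thesis by (simp add: face_of_singleton CIM_def X_def c_def)
qed

lemma vertices_CIM: "poly_vertices (CIM n) = {char_imset n E | E. is_DAG n E}"
proof
  show "poly_vertices (CIM n) \<subseteq> {char_imset n E | E. is_DAG n E}"
    using extreme_points_of_convex_hull by (simp add: poly_vertices_def CIM_def)
  show "{char_imset n E | E. is_DAG n E} \<subseteq> poly_vertices (CIM n)"
    using vertex by (auto simp: poly_vertices_def)
qed


lemma card_le1: "S \<subseteq> {l} \<Longrightarrow> card S \<le> 1"
  using card_mono[of "{l}" S] by simp

lemma edge:
  assumes dag: "is_DAG n E" and P: "pa E i \<noteq> {}" and src: "\<And>j. j \<in> pa E i \<Longrightarrow> pa E j = {}"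
  shows "poly_adj (CIM n) (char_imset n E) (char_imset n {e\<in>E. snd e \<noteq> i})"
proof -
  define E' where "E' = {e\<in>E. snd e \<noteq> i}"
  define T where "T = insert i (pa E i)"
  define F where "F = {S. i \<in> S \<and> S \<subseteq> T \<and> 2 \<le> card S}"
  define I where "I = (Pow {1..n} :: nat set set)"
  define c where "c = char_imset n E"
  define c' where "c' = char_imset n E'"
  define X where "X = {char_imset n E | E. is_DAG n E}"
  have Esub: "E \<subseteq> {1..n} \<times> {1..n}" and acyc: "acyclic E" using dag by (auto simp: is_DAG_def)
  have paE_sub: "pa E l \<subseteq> {1..n}" for l using Esub by (auto simp: pa_def)
  obtain j0 where j0: "j0 \<in> pa E i" using P by auto
  have i_n: "i \<in> {1..n}" using j0 Esub by (auto simp: pa_def)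
  have noself: "(l, l) \<notin> E" for l using acyc by (auto simp: acyclic_def)
  have i_notin: "i \<notin> pa E i" using noself by (auto simp: pa_def)
  have T_sub: "T \<subseteq> {1..n}" using i_n paE_sub by (auto simp: T_def)
  have finT: "finite T" using T_sub finite_subset by blast
  have "i \<noteq> j0" using i_notin j0 by auto
  then have "card {i, j0} = 2" by simp
  moreover have "card {i, j0} \<le> card T" using finT j0 by (intro card_mono) (auto simp: T_def)
  ultimately have cardT: "2 \<le> card T" by simp
  have T_F: "T \<in> F" using cardT by (simp add: F_def T_def)
  have F_I: "F \<subseteq> I" using T_sub by (auto simp: F_def I_def)
  have finI: "finite I" by (simp add: I_def)
  have finF: "finite F" using F_I finI finite_subset by blast
  have dag': "is_DAG n E'" using dag by (auto simp: is_DAG_def E'_def intro: acyclic_subset)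
  have paE': "pa E' l = (if l = i then {} else pa E l)" for l by (auto simp: pa_def E'_def)
  have cF: "c S = 1" if "S \<in> F" for S
    using that T_sub unfolding c_def char_one F_def T_def by auto
  have c'F: "c' S = 0" if "S \<in> F" for S
  proof -
    have "c' S \<noteq> 1"
    proof
      assume "c' S = 1"
      then obtain l where l: "l \<in> S" "S \<subseteq> pa E' l \<union> {l}" and cS: "2 \<le> card S"
        unfolding c'_def char_one by auto
      have "l \<in> T" using l that by (auto simp: F_def)
      then have "pa E' l = {}"
        using src by (auto simp: paE' T_def)
      then have "card S \<le> 1" using l by (intro card_le1) auto
      then show False using cS by simp
    qed
    then show ?thesis using char_cases by (metis c'_def)
  qed
  have c_out: "c' S = c S" if "S \<notin> F" for S
  proof -
    have "c S = 1 \<longleftrightarrow> c' S = 1"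
    proof
      assume "c S = 1"
      then obtain l where l: "l \<in> S" "S \<subseteq> pa E l \<union> {l}" and cS: "2 \<le> card S" and Sn: "S \<subseteq> {1..n}"
        unfolding c_def char_one by auto
      have "l \<noteq> i"
      proof
        assume "l = i"
        then have "S \<in> F" using l cS by (auto simp: F_def T_def)
        then show False using that by simp
      qed
      then show "c' S = 1" using l cS Sn unfolding c'_def char_one paE' by auto
    next
      assume "c' S = 1"
      then obtain l where l: "l \<in> S" "S \<subseteq> pa E' l \<union> {l}" and cS: "2 \<le> card S" and Sn: "S \<subseteq> {1..n}"
        unfolding c'_def char_one by auto
      have "l \<noteq> i"
      proof
        assume "l = i"
        then have "card S \<le> 1" using l by (intro card_le1) (auto simp: paE')
        then show False using cS by simp
      qed
      then show "c S = 1" using l cS Sn unfolding c_def char_one paE' by auto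
    qed
    then show ?thesis using char_cases c_def c'_def by metis
  qed
  have cc': "c \<noteq> c'" using cF[OF T_F] c'F[OF T_F] by auto
  have forced: "\<forall>S\<in>F. char_imset n H S = 1"
    if H: "is_DAG n H" and agree: "\<forall>S\<in>I-F. char_imset n H S = c S" and HT: "char_imset n H T = 1" for H
  proof -
    obtain k where k: "k \<in> T" "T \<subseteq> pa H k \<union> {k}" using HT unfolding char_one by auto
    show ?thesis
    proof (cases "k = i")
      case True
      show ?thesis
      proof
        fix S assume "S \<in> F"
        then have S: "i \<in> S" "S \<subseteq> T" "2 \<le> card S" by (auto simp: F_def)
        then have "S \<subseteq> {1..n}" "S \<subseteq> pa H i \<union> {i}" using T_sub k True by auto
        then show "char_imset n H S = 1" unfolding char_one using S by blast
      qed
    next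
      case False
      then have kP: "k \<in> pa E i" using k by (auto simp: T_def)
      have single: "pa E i = {k}"
      proof (rule ccontr)
        assume "pa E i \<noteq> {k}"
        then obtain p where p: "p \<in> pa E i" "p \<noteq> k" using kP by blast
        define S0 where "S0 = {k, p}"
        have "p \<in> {1..n}" "k \<in> {1..n}" using p kP paE_sub[of i] by blast+
        then have S0n: "S0 \<subseteq> {1..n}" by (simp add: S0_def)
        have cS0: "card S0 = 2" using p by (simp add: S0_def)
        have "S0 \<subseteq> pa H k \<union> {k}" using k p by (auto simp: S0_def T_def)
        then have "char_imset n H S0 = 1" using S0n cS0 unfolding char_one S0_def by auto
        moreover have "S0 \<in> I - F" using S0n p kP i_notin by (auto simp: S0_def I_def F_def)
        ultimately have "c S0 = 1" using agree by auto
        then obtain l where l: "l \<in> S0" "S0 \<subseteq> pa E l \<union> {l}" unfolding c_def char_one by auto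
        then show False using src[OF p(1)] src[OF kP] p by (auto simp: S0_def)
      qed
      have "S = T" if "S \<in> F" for S
      proof -
        have "S \<subseteq> T" "2 \<le> card S" using that by (auto simp: F_def)
        moreover have "card T = 2" using single False by (simp add: T_def)
        moreover have "card S \<le> card T" using \<open>S \<subseteq> T\<close> finT by (rule card_mono[rotated])
        ultimately show ?thesis using finT card_subset_eq by (metis le_antisym)
      qed
      then show ?thesis using HT by auto
    qed
  qed
  define M where "M = real (card F)"
  define fs where "fs h = (\<Sum>S\<in>F. (if S = T then M - 1 else -1) * h S)" for h :: "nat set \<Rightarrow> real"
  define ag where "ag h = (\<Sum>S\<in>I-F. (if c S = 1 then 1 else -1) * h S)" for h :: "nat set \<Rightarrow> real"
  define w where "w S = (if S \<in> F then (if S = T then M - 1 else -1) else M * (if c S = 1 then 1 else -1))" for S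
  define m where "m = M * sum c (I - F)"
  have lf_split: "lf w I h = M * ag h + fs h" for h
  proof -
    have "lf w I h = (\<Sum>S\<in>I-F. w S * h S) + (\<Sum>S\<in>F. w S * h S)"
      unfolding lf_def using sum.subset_diff[OF F_I finI] by simp
    also have "(\<Sum>S\<in>I-F. w S * h S) = M * ag h"
      unfolding ag_def sum_distrib_left by (intro sum.cong) (auto simp: w_def)
    also have "(\<Sum>S\<in>F. w S * h S) = fs h"
      unfolding fs_def by (intro sum.cong) (auto simp: w_def)
    finally show ?thesis .
  qed
  have M1: "M \<ge> 1" using T_F finF by (simp add: M_def Suc_le_eq card_gt_0_iff) blast
  have fs_rem: "fs h = (M - 1) * h T - (\<Sum>S\<in>F-{T}. h S)" for h
  proof -
    have "fs h = (M - 1) * h T + (\<Sum>S\<in>F-{T}. (if S = T then M - 1 else -1) * h S)"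
      unfolding fs_def by (subst sum.remove[OF finF T_F]) simp
    also have "(\<Sum>S\<in>F-{T}. (if S = T then M - 1 else -1) * h S) = - (\<Sum>S\<in>F-{T}. h S)"
      by (simp add: sum_negf[symmetric])
    finally show ?thesis by simp
  qed
  have fs_one: "fs h = 0" if "\<forall>S\<in>F. h S = 1" for h
  proof -
    have "(\<Sum>S\<in>F-{T}. h S) = real (card (F - {T}))" using that by simp
    also have "\<dots> = M - 1"
    proof -
      have "card F \<ge> 1" using T_F finF by (metis One_nat_def Suc_leI card_gt_0_iff empty_iff)
      then show ?thesis using T_F finF by (simp add: M_def card_Diff_singleton of_nat_diff)
    qed
    finally show ?thesis using fs_rem that T_F by simp
  qed
  have fs_zero: "fs h \<le> 0 \<and> (fs h = 0 \<longleftrightarrow> (\<forall>S\<in>F. h S = 0))"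
    if "h T = 0" "\<forall>S\<in>F. h S = 0 \<or> h S = 1" for h
  proof -
    have e: "fs h = - (\<Sum>S\<in>F-{T}. h S)" using fs_rem that by simp
    have nn: "\<forall>S\<in>F-{T}. 0 \<le> h S" using that by force
    have "(\<Sum>S\<in>F-{T}. h S) = 0 \<longleftrightarrow> (\<forall>S\<in>F-{T}. h S = 0)"
      using nn finF by (intro sum_nonneg_eq_0_iff) auto
    then show ?thesis using e nn sum_nonneg[of "F-{T}" h] that by auto
  qed
  have fs_le: "fs h \<le> M - 1" if "\<forall>S\<in>F. h S = 0 \<or> h S = 1" for h
  proof -
    have nn: "0 \<le> (\<Sum>S\<in>F-{T}. h S)" using that by (intro sum_nonneg) force
    have "h T \<le> 1" using that T_F by force
    then have "(M - 1) * h T \<le> (M - 1) * 1" using M1 by (intro mult_left_mono) auto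
    then show ?thesis using fs_rem[of h] nn by simp
  qed
  have main: "lf w I x \<le> m \<and> (lf w I x = m \<longleftrightarrow> x = c \<or> x = c')" if "x \<in> X" for x
  proof -
    obtain H where H: "x = char_imset n H" "is_DAG n H" using \<open>x \<in> X\<close> unfolding X_def by blast
    have x01: "\<And>S. x S = 0 \<or> x S = 1" by (simp add: H char_cases)
    have c01: "\<And>S. c S = 0 \<or> c S = 1" by (simp add: c_def char_cases)
    note a = agr[of "I - F" c x, OF _ c01 x01]
    have aI: "finite (I - F)" using finI by simp
    have xc: "x = c \<longleftrightarrow> (\<forall>S\<in>I. x S = c S)"
      using char_eqI[of n H E] by (auto simp: H c_def I_def)
    have xc': "x = c' \<longleftrightarrow> (\<forall>S\<in>I. x S = c' S)"
      using char_eqI[of n H E'] by (auto simp: H c'_def I_def)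
    show ?thesis
    proof (cases "\<forall>S\<in>I-F. x S = c S")
      case False
      have "ag x \<le> sum c (I - F) - 1" using a(3)[OF aI False] by (simp add: ag_def)
      then have "M * ag x \<le> M * (sum c (I - F) - 1)" using M1 by (intro mult_left_mono) auto
      moreover have "M * (sum c (I - F) - 1) = m - M" by (simp add: m_def algebra_simps)
      moreover have "fs x \<le> M - 1" using fs_le x01 by blast
      ultimately have "lf w I x < m" unfolding lf_split by linarith
      moreover have "x \<noteq> c" using False by auto
      moreover have "x \<noteq> c'"
      proof
        assume "x = c'"
        then have "\<forall>S\<in>I-F. x S = c S" using c_out by simp
        then show False using False by blast
      qed
      ultimately show ?thesis by simp
    next
      case True
      have agm: "M * ag x = m" using a(2)[OF aI] True by (simp add: ag_def m_def)
      show ?thesis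
      proof (cases "x T = 1")
        case True1: True
        have xF: "\<forall>S\<in>F. x S = 1" using forced[OF H(2)] True True1 unfolding H(1) by blast
        then have "fs x = 0" by (rule fs_one)
        moreover have "x = c" unfolding xc
        proof
          fix S assume "S \<in> I"
          show "x S = c S"
          proof (cases "S \<in> F")
            case True
            then show ?thesis using xF cF by simp
          next
            case False
            then show ?thesis using True \<open>S \<in> I\<close> by blast
          qed
        qed
        ultimately show ?thesis using agm lf_split by simp
      next
        case False
        then have xT: "x T = 0" using x01 by metis
        have z: "fs x \<le> 0 \<and> (fs x = 0 \<longleftrightarrow> (\<forall>S\<in>F. x S = 0))"
          using fs_zero[of x, OF xT] x01 by blast
        have "x \<noteq> c" using xT cF[OF T_F] by auto
        moreover have "fs x = 0 \<longleftrightarrow> x = c'"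
        proof -
          have "(\<forall>S\<in>F. x S = 0) \<longleftrightarrow> (\<forall>S\<in>I. x S = c' S)"
          proof
            assume h: "\<forall>S\<in>F. x S = 0"
            show "\<forall>S\<in>I. x S = c' S"
            proof
              fix S assume "S \<in> I"
              show "x S = c' S"
              proof (cases "S \<in> F")
                case True
                then show ?thesis using h c'F by simp
              next
                case False
                then show ?thesis using \<open>\<forall>S\<in>I-F. x S = c S\<close> \<open>S \<in> I\<close> c_out[OF False] by simp
              qed
            qed
          next
            assume h: "\<forall>S\<in>I. x S = c' S"
            show "\<forall>S\<in>F. x S = 0" using h c'F F_I by auto
          qed
          then show ?thesis using xc' z by simp
        qed
        ultimately show ?thesis using agm lf_split z by auto
      qed
    qed
  qed
  have cX: "c \<in> X" "c' \<in> X" using dag dag' by (auto simp: X_def c_def c'_def)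
  have "{x\<in>X. lf w I x = m} = {c, c'}" using main cX by auto
  then have "convex hull {c, c'} face_of convex hull X"
    using exposed_face[of X w I m] finite_X main by (auto simp: X_def)
  then show ?thesis
    using cc' cX vertices_CIM unfolding poly_adj_def CIM_def c_def c'_def E'_def X_def by auto
qed


inductive reach :: "('a \<Rightarrow> 'a \<Rightarrow> bool) \<Rightarrow> 'a \<Rightarrow> 'a \<Rightarrow> nat \<Rightarrow> bool" for adj where
  r0: "reach adj u u 0"
| rS: "adj u w \<Longrightarrow> reach adj w v k \<Longrightarrow> reach adj u v (Suc k)"

lemma reach_walk: "reach adj u v k \<Longrightarrow> \<exists>p. is_walk adj p \<and> hd p = u \<and> last p = v \<and> length p = Suc k"
proof (induction rule: reach.induct)
  case (r0 u)
  then show ?case by (intro exI[of _ "[u]"]) (simp add: is_walk_def)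
next
  case (rS u w v k)
  then obtain p where p: "is_walk adj p" "hd p = w" "last p = v" "length p = Suc k" by blast
  have ne: "p \<noteq> []" using p by auto
  have "is_walk adj (u # p)"
    unfolding is_walk_def
  proof (intro conjI allI impI)
    fix j assume j: "j < length (u # p) - 1"
    show "adj ((u # p) ! j) ((u # p) ! Suc j)"
    proof (cases j)
      case 0
      then show ?thesis using rS.hyps(1) p(2) ne by (simp add: hd_conv_nth)
    next
      case (Suc j')
      then show ?thesis using p(1) j by (simp add: is_walk_def)
    qed
  qed simp
  then show ?case using p ne by (intro exI[of _ "u # p"]) simp
qed

lemma reach_trans: "reach adj u v k \<Longrightarrow> reach adj v x l \<Longrightarrow> reach adj u x (k + l)"
  by (induction rule: reach.induct) (auto intro: reach.intros)

lemma reach_sym: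
  assumes sym: "\<And>a b. adj a b \<Longrightarrow> adj b a"
  shows "reach adj u v k \<Longrightarrow> reach adj v u k"
proof (induction rule: reach.induct)
  case (r0 u)
  then show ?case by (rule reach.r0)
next
  case (rS u w v k)
  have "reach adj w u 1" using sym[OF rS.hyps(1)] by (auto intro: reach.intros)
  from reach_trans[OF rS.IH this] show ?case by simp
qed

lemma poly_adj_sym: "poly_adj P a b \<Longrightarrow> poly_adj P b a"
  by (auto simp: poly_adj_def insert_commute)

lemma to_zero:
  "is_DAG n E \<Longrightarrow> reach (poly_adj (CIM n)) (char_imset n E) (char_imset n {}) (card {l. pa E l \<noteq> {}})"
proof (induction "card {l. pa E l \<noteq> {}}" arbitrary: E rule: less_induct)
  case less
  define A where "A = {l. pa E l \<noteq> {}}"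
  have Esub: "E \<subseteq> {1..n} \<times> {1..n}" and acyc: "acyclic E" using less.prems by (auto simp: is_DAG_def)
  have finE: "finite E" using Esub finite_subset by blast
  have A_sub: "A \<subseteq> {1..n}" using Esub by (auto simp: A_def pa_def)
  have finA: "finite A" using A_sub finite_subset by blast
  show ?case
  proof (cases "A = {}")
    case True
    then have "E = {}" by (auto simp: A_def pa_def)
    then show ?thesis using True by (simp add: A_def reach.r0)
  next
    case False
    then obtain a where "a \<in> A" by blast
    have wfE: "wf E" using finite_acyclic_wf[OF finE acyc] .
    obtain i where i: "i \<in> A" and imin: "\<And>y. (y, i) \<in> E \<Longrightarrow> y \<notin> A"
      using wfE_min[OF wfE \<open>a \<in> A\<close>] by blast
    have P: "pa E i \<noteq> {}" using i by (simp add: A_def)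
    have src: "pa E j = {}" if "j \<in> pa E i" for j using imin[of j] that by (simp add: A_def pa_def)
    define E' where "E' = {e\<in>E. snd e \<noteq> i}"
    have dag': "is_DAG n E'" using less.prems by (auto simp: is_DAG_def E'_def intro: acyclic_subset)
    have paE': "pa E' l = (if l = i then {} else pa E l)" for l by (auto simp: pa_def E'_def)
    have A': "{l. pa E' l \<noteq> {}} = A - {i}" by (auto simp: paE' A_def)
    have cardA': "card {l. pa E' l \<noteq> {}} < card A" unfolding A'
      by (rule card_Diff1_less[OF finA i])
    have IH: "reach (poly_adj (CIM n)) (char_imset n E') (char_imset n {}) (card {l. pa E' l \<noteq> {}})"
      using less.hyps[OF cardA'[unfolded A_def] dag'] .
    have ed: "poly_adj (CIM n) (char_imset n E) (char_imset n E')"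
      using edge[OF less.prems P src] by (simp add: E'_def)
    have "card A = Suc (card {l. pa E' l \<noteq> {}})" unfolding A' using i finA
      by (simp add: card_Diff_singleton) (metis Suc_pred card_gt_0_iff empty_iff)
    then show ?thesis using reach.rS[OF ed IH] by (simp add: A_def)
  qed
qed

lemma card_bound:
  assumes "is_DAG n E" "n \<ge> 1"
  shows "card {l. pa E l \<noteq> {}} \<le> n - 1"
proof -
  have Esub: "E \<subseteq> {1..n} \<times> {1..n}" and acyc: "acyclic E" using assms by (auto simp: is_DAG_def)
  have finE: "finite E" using Esub finite_subset by blast
  have wfE: "wf E" using finite_acyclic_wf[OF finE acyc] .
  have "1 \<in> {1..n}" using assms by simp
  then obtain z where z: "z \<in> {1..n}" and zmin: "\<And>y. (y, z) \<in> E \<Longrightarrow> y \<notin> {1..n}"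
    using wfE_min[OF wfE] by blast
  have "pa E z = {}" using zmin Esub unfolding pa_def by blast
  then have "{l. pa E l \<noteq> {}} \<subseteq> {1..n} - {z}" using Esub by (auto simp: pa_def)
  then have "card {l. pa E l \<noteq> {}} \<le> card ({1..n} - {z})" by (intro card_mono) auto
  also have "\<dots> = n - 1" using z by simp
  finally show ?thesis .
qed

theorem mainTheorem7:
  fixes n :: nat
  assumes "n \<ge> 1"
  shows "poly_diam (CIM n) \<le> enat (2 * n - 2)"
  unfolding poly_diam_def
proof (intro SUP_least)
  fix u v assume u: "u \<in> poly_vertices (CIM n)" and v: "v \<in> poly_vertices (CIM n)"
  obtain E1 where E1: "u = char_imset n E1" "is_DAG n E1" using u vertices_CIM by auto
  obtain E2 where E2: "v = char_imset n E2" "is_DAG n E2" using v vertices_CIM by auto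
  define k1 where "k1 = card {l. pa E1 l \<noteq> {}}"
  define k2 where "k2 = card {l. pa E2 l \<noteq> {}}"
  have r1: "reach (poly_adj (CIM n)) u (char_imset n {}) k1" using to_zero[OF E1(2)] by (simp add: E1 k1_def)
  have r2: "reach (poly_adj (CIM n)) (char_imset n {}) v k2"
    using reach_sym[OF poly_adj_sym to_zero[OF E2(2)]] by (simp add: E2 k2_def)
  obtain p where p: "is_walk (poly_adj (CIM n)) p" "hd p = u" "last p = v" "length p = Suc (k1 + k2)"
    using reach_walk[OF reach_trans[OF r1 r2]] by blast
  have "graph_dist (poly_adj (CIM n)) u v \<le> enat (length p - 1)"
    unfolding graph_dist_def using p by (intro INF_lower) auto
  also have "\<dots> \<le> enat (2 * n - 2)"
    using card_bound[OF E1(2) assms] card_bound[OF E2(2) assms] p(4) by (simp add: k1_def k2_def)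
  finally show "graph_dist (poly_adj (CIM n)) u v \<le> enat (2 * n - 2)" .
qed

end
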